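(* Let $G$ be a graph, $S\subseteq V(G)$, and $C$ a connected component of $G$, and suppose we are given a proper $2$-coloring (with colors white and black) of $C$. Let $G'$ be the graph obtained from $G$ by replacing $C$ with a star (with a new center vertex) whose ray vertices (leaves) are the vertices of $C\cap S$, and then subdividing those star edges whose ray vertex is black in the $2$-coloring. Then $B_G(S)=B_{G'}(S)$.
   Context: For a graph $G$ and $S\subseteq V(G)$, $B_G(S)$ is the set of subsets $S'\subseteq S$ such that there is a bipartition of $G$ (a proper $2$-coloring) with all vertices of $S'$ in one part and all vertices of $S\setminus S'$ in the other. If $G$ is not bipartite, $B_G(S)=\emptyset$. *)

theory Defs
  imports Main
begin

definition graph :: "'a set \<Rightarrow> 'a set set \<Rightarrow> bool" where
  "graph V E \<longleftrightarrow> finite V \<and> (\<forall>e\<in>E. \<exists>u v. u \<noteq> v \<and> u \<in> V \<and> v \<in> V \<and> e = {u, v})"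

definition adj :: "'a set set \<Rightarrow> 'a \<Rightarrow> 'a \<Rightarrow> bool" where
  "adj E u v \<longleftrightarrow> {u, v} \<in> E"

definition component :: "'a set \<Rightarrow> 'a set set \<Rightarrow> 'a set \<Rightarrow> bool" where
  "component V E C \<longleftrightarrow> (\<exists>v\<in>V. C = {u. (adj E)\<^sup>*\<^sup>* v u})"

definition bipartition :: "'a set \<Rightarrow> 'a set set \<Rightarrow> 'a set \<Rightarrow> 'a set \<Rightarrow> bool" where
  "bipartition V E A B \<longleftrightarrow> A \<union> B = V \<and> A \<inter> B = {} \<and>
     (\<forall>e\<in>E. e \<inter> A \<noteq> {} \<and> e \<inter> B \<noteq> {})"

definition Bset :: "'a set \<Rightarrow> 'a set set \<Rightarrow> 'a set \<Rightarrow> 'a set set" where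
  "Bset V E S = {S'. S' \<subseteq> S \<and> (\<exists>A B. bipartition V E A B \<and> S' \<subseteq> A \<and> S - S' \<subseteq> B)}"

text \<open>A proper 2-coloring of the component C: col x = True means black, False white.\<close>
definition proper_col_on :: "'a set set \<Rightarrow> 'a set \<Rightarrow> ('a \<Rightarrow> bool) \<Rightarrow> bool" where
  "proper_col_on E C col \<longleftrightarrow> (\<forall>u\<in>C. \<forall>v\<in>C. {u, v} \<in> E \<longrightarrow> col u \<noteq> col v)"

definition star_V :: "'a set \<Rightarrow> 'a set \<Rightarrow> 'a set \<Rightarrow> ('a \<Rightarrow> bool) \<Rightarrow> 'a \<Rightarrow> ('a \<Rightarrow> 'a) \<Rightarrow> 'a set" where
  "star_V V C S col c sub =
     (V - C) \<union> (C \<inter> S) \<union> {c} \<union> sub ` {x \<in> C \<inter> S. col x}"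

definition star_E :: "'a set set \<Rightarrow> 'a set \<Rightarrow> 'a set \<Rightarrow> ('a \<Rightarrow> bool) \<Rightarrow> 'a \<Rightarrow> ('a \<Rightarrow> 'a) \<Rightarrow> 'a set set" where
  "star_E E C S col c sub =
     {e \<in> E. e \<inter> C = {}}
     \<union> {{c, x} | x. x \<in> C \<inter> S \<and> \<not> col x}
     \<union> {{c, sub x} | x. x \<in> C \<inter> S \<and> col x}
     \<union> {{sub x, x} | x. x \<in> C \<inter> S \<and> col x}"

end

theory Submission
  imports Defs
begin

lemma edge_in_V:
  assumes "graph V E" "{y, z} \<in> E" shows "y \<in> V" "z \<in> V"
  using assms unfolding graph_def by (auto simp: doubleton_eq_iff)

lemma bip_edge:
  assumes "bipartition V E A B" "{u, w} \<in> E" "u \<in> V" "w \<in> V"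
  shows "u \<in> A \<longleftrightarrow> w \<notin> A"
proof -
  have "A \<union> B = V" "A \<inter> B = {}" "{u,w} \<inter> A \<noteq> {}" "{u,w} \<inter> B \<noteq> {}"
    using assms(1,2) unfolding bipartition_def by auto
  then show ?thesis using assms(3,4) by auto
qed

lemma bip_intro:
  assumes "\<And>e. e \<in> E \<Longrightarrow> \<exists>u w. e = {u, w} \<and> u \<in> V \<and> w \<in> V \<and> (u \<in> A \<longleftrightarrow> w \<notin> A)"
    and "A \<subseteq> V"
  shows "bipartition V E A (V - A)"
  unfolding bipartition_def
proof (intro conjI ballI)
  fix e assume "e \<in> E"
  then obtain u w where "e = {u, w}" "u \<in> V" "w \<in> V" "u \<in> A \<longleftrightarrow> w \<notin> A"
    using assms(1) by blast
  then show "e \<inter> A \<noteq> {}" "e \<inter> (V - A) \<noteq> {}" by auto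
qed (use assms(2) in auto)

lemma comp_C_sub:
  assumes "graph V E" "component V E C" shows "C \<subseteq> V"
proof -
  obtain v where v: "v \<in> V" "C = {u. (adj E)\<^sup>*\<^sup>* v u}" using assms(2) unfolding component_def by blast
  have "(adj E)\<^sup>*\<^sup>* v u \<Longrightarrow> u \<in> V" for u
    by (induction rule: rtranclp_induct) (use v assms(1) edge_in_V in \<open>auto simp: adj_def\<close>)
  then show ?thesis using v by auto
qed

lemma comp_closed:
  assumes "component V E C" "{u, w} \<in> E" "u \<in> C" shows "w \<in> C"
proof -
  obtain v where v: "v \<in> V" "C = {u. (adj E)\<^sup>*\<^sup>* v u}" using assms(1) unfolding component_def by blast
  have "adj E u w" using assms(2) by (simp add: adj_def)
  then show ?thesis using assms(3) v by (auto intro: rtranclp.rtrancl_into_rtrancl)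
qed

lemma comp_closed2:
  assumes "component V E C" "{u, w} \<in> E" "u \<in> C \<or> w \<in> C" shows "u \<in> C \<and> w \<in> C"
  using assms comp_closed[of V E C u w] comp_closed[of V E C w u] by (auto simp: insert_commute)

lemma comp_const:
  assumes "graph V E" "component V E C" "proper_col_on E C col" "bipartition V E A B"
  shows "\<exists>b. \<forall>x\<in>C. (x \<in> A) = (col x = b)"
proof -
  obtain v where v: "v \<in> V" "C = {u. (adj E)\<^sup>*\<^sup>* v u}" using assms(2) unfolding component_def by blast
  have CV: "C \<subseteq> V" using comp_C_sub assms by blast
  have "(adj E)\<^sup>*\<^sup>* v u \<Longrightarrow> (u \<in> A) = (col u = (v \<in> A = col v))" for u
  proof (induction rule: rtranclp_induct)
    case base then show ?case by auto
  next
    case (step y z)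
    have e: "{y, z} \<in> E" using step(2) by (simp add: adj_def)
    have yC: "y \<in> C" using step(1) v by auto
    have zC: "z \<in> C" using comp_closed[OF assms(2) e yC] .
    have "col y \<noteq> col z" using assms(3) yC zC e unfolding proper_col_on_def by blast
    moreover have "y \<in> A \<longleftrightarrow> z \<notin> A" using bip_edge[OF assms(4) e] yC zC CV by blast
    ultimately show ?case using step(3) by auto
  qed
  then show ?thesis using v by blast
qed

theorem lemma5p4:
  fixes V :: "'a set" and E :: "'a set set" and S C :: "'a set"
    and col :: "'a \<Rightarrow> bool" and c :: 'a and sub :: "'a \<Rightarrow> 'a"
  assumes "graph V E"
    and "S \<subseteq> V"
    and "component V E C"
    and "proper_col_on E C col"
    and "c \<notin> V"
    and "\<forall>x\<in>C \<inter> S. col x \<longrightarrow> sub x \<notin> V \<and> sub x \<noteq> c"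
    and "inj_on sub {x \<in> C \<inter> S. col x}"
  shows "Bset V E S = Bset (star_V V C S col c sub) (star_E E C S col c sub) S"
proof
  let ?V' = "star_V V C S col c sub" and ?E' = "star_E E C S col c sub"
  have CV: "C \<subseteq> V" using comp_C_sub assms by blast
  show "Bset V E S \<subseteq> Bset ?V' ?E' S"
  proof
    fix S' assume "S' \<in> Bset V E S"
    then obtain A B where S': "S' \<subseteq> S" "bipartition V E A B" "S' \<subseteq> A" "S - S' \<subseteq> B"
      unfolding Bset_def by blast
    obtain b where b: "\<forall>x\<in>C. (x \<in> A) = (col x = b)" using comp_const[OF assms(1,3,4) S'(2)] by blast
    define f where "f y = (if y \<in> V then y \<in> A else if y = c then b else \<not> b)" for y
    define A' where "A' = {y \<in> ?V'. f y}"
    have bip: "bipartition ?V' ?E' A' (?V' - A')"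
    proof (rule bip_intro)
      fix e assume "e \<in> ?E'"
      then consider (old) "e \<in> E" "e \<inter> C = {}"
        | (w) x where "e = {c, x}" "x \<in> C \<inter> S" "\<not> col x"
        | (b1) x where "e = {c, sub x}" "x \<in> C \<inter> S" "col x"
        | (b2) x where "e = {sub x, x}" "x \<in> C \<inter> S" "col x"
        unfolding star_E_def by blast
      then show "\<exists>u w. e = {u, w} \<and> u \<in> ?V' \<and> w \<in> ?V' \<and> (u \<in> A' \<longleftrightarrow> w \<notin> A')"
      proof cases
        case old
        then obtain u w where uw: "e = {u, w}" "u \<in> V" "w \<in> V"
          using assms(1) unfolding graph_def by blast
        have "u \<notin> C" "w \<notin> C" using old uw by auto
        then have "u \<in> ?V'" "w \<in> ?V'" using uw unfolding star_V_def by auto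
        moreover have "u \<in> A \<longleftrightarrow> w \<notin> A" using bip_edge[OF S'(2), of u w] old(1) uw by simp
        moreover have "f u = (u \<in> A)" "f w = (w \<in> A)" using uw unfolding f_def by simp_all
        ultimately show ?thesis using uw(1) unfolding A'_def by (intro exI[of _ u] exI[of _ w]) simp
      next
        case w
        have "x \<in> V" using w CV by auto
        then have "c \<in> ?V'" "x \<in> ?V'" unfolding star_V_def using w by auto
        moreover have "f c = b" "f x = (\<not> b)" using assms(5) \<open>x \<in> V\<close> b w unfolding f_def by auto
        ultimately show ?thesis using w(1) unfolding A'_def by (intro exI[of _ c] exI[of _ x]) simp
      next
        case b1
        have "c \<in> ?V'" "sub x \<in> ?V'" unfolding star_V_def using b1 by auto
        moreover have "f c = b" "f (sub x) = (\<not> b)" using assms(5,6) b1 unfolding f_def by auto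
        ultimately show ?thesis using b1(1) unfolding A'_def by (intro exI[of _ c] exI[of _ "sub x"]) simp
      next
        case b2
        have "x \<in> V" using b2 CV by auto
        then have "x \<in> ?V'" "sub x \<in> ?V'" unfolding star_V_def using b2 by auto
        moreover have "f x = b" "f (sub x) = (\<not> b)" using assms(5,6) b2 b \<open>x \<in> V\<close> unfolding f_def by auto
        ultimately show ?thesis using b2(1) unfolding A'_def by (intro exI[of _ "sub x"] exI[of _ x]) simp
      qed
    qed (auto simp: A'_def)
    have SV': "S \<subseteq> ?V'" using assms(2) unfolding star_V_def by auto
    have sA: "S' \<subseteq> A'" using S' SV' assms(2) unfolding A'_def f_def by auto
    have AB: "A \<inter> B = {}" using S'(2) unfolding bipartition_def by simp
    have "S - S' \<subseteq> ?V' - A'"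
    proof
      fix s assume s: "s \<in> S - S'"
      then have "s \<in> B" using S'(4) by blast
      then have "s \<notin> A" using AB by blast
      then show "s \<in> ?V' - A'" using s SV' assms(2) unfolding A'_def f_def by auto
    qed
    then show "S' \<in> Bset ?V' ?E' S" using bip S'(1) sA unfolding Bset_def
      by (intro CollectI conjI exI[of _ A'] exI[of _ "?V' - A'"]) simp_all
  qed
  show "Bset ?V' ?E' S \<subseteq> Bset V E S"
  proof
    fix S' assume "S' \<in> Bset ?V' ?E' S"
    then obtain A' B' where S': "S' \<subseteq> S" "bipartition ?V' ?E' A' B'" "S' \<subseteq> A'" "S - S' \<subseteq> B'"
      unfolding Bset_def by blast
    define b where "b = (c \<in> A')"
    define A where "A = (A' \<inter> (V - C)) \<union> {x \<in> C. col x = b}"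
    have cV': "c \<in> ?V'" unfolding star_V_def by auto
    have key: "x \<in> A' \<longleftrightarrow> col x = b" if x: "x \<in> C \<inter> S" for x
    proof (cases "col x")
      case False
      have e: "{c, x} \<in> ?E'" unfolding star_E_def using x False by blast
      have "x \<in> ?V'" unfolding star_V_def using x by auto
      then show ?thesis using bip_edge[OF S'(2) e cV'] False b_def by auto
    next
      case True
      have e1: "{c, sub x} \<in> ?E'" unfolding star_E_def using x True by blast
      have e2: "{sub x, x} \<in> ?E'" unfolding star_E_def using x True by blast
      have "x \<in> ?V'" "sub x \<in> ?V'" unfolding star_V_def using x True by auto
      then show ?thesis using bip_edge[OF S'(2) e1 cV'] bip_edge[OF S'(2) e2] True b_def by auto
    qed
    have bip: "bipartition V E A (V - A)"
    proof (rule bip_intro)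
      fix e assume eE: "e \<in> E"
      then obtain u w where uw: "e = {u, w}" "u \<in> V" "w \<in> V"
        using assms(1) unfolding graph_def by blast
      show "\<exists>u w. e = {u, w} \<and> u \<in> V \<and> w \<in> V \<and> (u \<in> A \<longleftrightarrow> w \<notin> A)"
      proof (cases "u \<in> C \<or> w \<in> C")
        case True
        then have "u \<in> C" "w \<in> C" using comp_closed2[OF assms(3)] eE uw by blast+
        then have "col u \<noteq> col w" using assms(4) eE uw unfolding proper_col_on_def by blast
        then have "u \<in> A \<longleftrightarrow> w \<notin> A" using \<open>u \<in> C\<close> \<open>w \<in> C\<close> unfolding A_def by auto
        then show ?thesis using uw by (intro exI[of _ u] exI[of _ w]) simp
      next
        case False
        then have "e \<in> ?E'" using eE uw unfolding star_E_def by auto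
        moreover have "u \<in> ?V'" "w \<in> ?V'" using uw False unfolding star_V_def by auto
        ultimately have "u \<in> A' \<longleftrightarrow> w \<notin> A'" using bip_edge[OF S'(2), of u w] uw by simp
        then have "u \<in> A \<longleftrightarrow> w \<notin> A" using False uw(2,3) unfolding A_def by auto
        then show ?thesis using uw by (intro exI[of _ u] exI[of _ w]) simp
      qed
    qed (use CV in \<open>auto simp: A_def\<close>)
    have sA: "S' \<subseteq> A" using S' key assms(2) unfolding A_def by auto
    have AB: "A' \<inter> B' = {}" using S'(2) unfolding bipartition_def by simp
    have "S - S' \<subseteq> V - A"
    proof
      fix s assume s: "s \<in> S - S'"
      then have "s \<in> B'" using S'(4) by blast
      then have "s \<notin> A'" using AB by blast
      then show "s \<in> V - A" using s key[of s] assms(2) unfolding A_def by auto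
    qed
    then show "S' \<in> Bset V E S" using bip S'(1) sA unfolding Bset_def
      by (intro CollectI conjI exI[of _ A] exI[of _ "V - A"]) simp_all
  qed
qed

end
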